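(* Let $(X,\mathcal E_X)$ be a ballean. If $\operatorname{cof}_\star(\mathcal E_X)\le\operatorname{add}(\mathcal B_X)$, then $X$ is normal.
   Context: A ballean is a pair $(X,\mathcal E_X)$ where $X$ is a set and $\mathcal E_X$ is a family of subsets of $X\times X$ (called entourages) such that: each $E\in\mathcal E_X$ contains the diagonal $\Delta_X=\{(x,x):x\in X\}$; for any $E,F\in\mathcal E_X$ there is $D\in\mathcal E_X$ with $E\circ F^{-1}\subset D$, where $E\circ F=\{(x,z):\exists y\ (x,y)\in E,\ (y,z)\in F\}$ and $F^{-1}=\{(y,x):(x,y)\in F\}$; and $\bigcup\mathcal E_X=X\times X$. For $E\in\mathcal E_X$, $x\in X$, $A\subset X$ put $E[x]=\{y:(x,y)\in E\}$ and $E[A]=\bigcup_{a\in A}E[a]$. A set $B\subset X$ is bounded if $B\subset E[x]$ for some $E\in\mathcal E_X$, $x\in X$; $\mathcal B_X$ denotes the family of bounded sets (the bornology). Sets $A,B\subset X$ are asymptotically disjoint if $E[A]\cap E[B]\in\mathcal B_X$ for all $E\in\mathcal E_X$; $U\subset X$ is an asymptotic neighborhood of $A$ if $E[A]\setminus U\in\mathcal B_X$ for all $E\in\mathcal E_X$. $X$ is normal if any two asymptotically disjoint sets have disjoint asymptotic neighborhoods. For a partially ordered set $P$: $\operatorname{add}(P)$ is the smallest cardinality of a subset of $P$ having no upper bound in $P$, and $\operatorname{cof}(P)$ is the smallest cardinality of a cofinal subset of $P$; if $P$ has a largest element, put $\operatorname{add}(P)=\operatorname{cof}(P)=1$. $\mathcal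 B_X$ is ordered by inclusion. For $A\subset X$, $\operatorname{cof}_*(\mathcal E_X[A])$ is the smallest cardinality of a subfamily $\mathcal C\subset\mathcal E_X$ such that for every $E\in\mathcal E_X$ there is $C\in\mathcal C$ with $E[A]\setminus C[A]\in\mathcal B_X$; and $\operatorname{cof}_\star(\mathcal E_X)=\sup_{A\subset X}\operatorname{cof}_*(\mathcal E_X[A])$. *)

theory Defs
  imports Main
begin

text \<open>A ballean on the carrier X with family of entourages \<E>.
  E[x] is rendered as E `` {x}, E[A] as E `` A; relcomp (O) is the composition of the paper.\<close>

definition ballean :: "'a set \<Rightarrow> ('a \<times> 'a) set set \<Rightarrow> bool" where
  "ballean X \<E> \<longleftrightarrow>
     (\<forall>E\<in>\<E>. E \<subseteq> X \<times> X \<and> Id_on X \<subseteq> E) \<and>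
     (\<forall>E\<in>\<E>. \<forall>F\<in>\<E>. \<exists>D\<in>\<E>. E O F\<inverse> \<subseteq> D) \<and>
     \<Union>\<E> = X \<times> X"

definition bounded_set :: "'a set \<Rightarrow> ('a \<times> 'a) set set \<Rightarrow> 'a set \<Rightarrow> bool" where
  "bounded_set X \<E> B \<longleftrightarrow> (\<exists>E\<in>\<E>. \<exists>x\<in>X. B \<subseteq> E `` {x})"

definition bornology :: "'a set \<Rightarrow> ('a \<times> 'a) set set \<Rightarrow> 'a set set" where
  "bornology X \<E> = {B. bounded_set X \<E> B}"

definition asymp_disjoint :: "'a set \<Rightarrow> ('a \<times> 'a) set set \<Rightarrow> 'a set \<Rightarrow> 'a set \<Rightarrow> bool" where
  "asymp_disjoint X \<E> A B \<longleftrightarrow> (\<forall>E\<in>\<E>. bounded_set X \<E> (E `` A \<inter> E `` B))"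

definition asymp_nbhd :: "'a set \<Rightarrow> ('a \<times> 'a) set set \<Rightarrow> 'a set \<Rightarrow> 'a set \<Rightarrow> bool" where
  "asymp_nbhd X \<E> U A \<longleftrightarrow> (\<forall>E\<in>\<E>. bounded_set X \<E> (E `` A - U))"

definition normal_ballean :: "'a set \<Rightarrow> ('a \<times> 'a) set set \<Rightarrow> bool" where
  "normal_ballean X \<E> \<longleftrightarrow>
     (\<forall>A B. A \<subseteq> X \<longrightarrow> B \<subseteq> X \<longrightarrow> asymp_disjoint X \<E> A B \<longrightarrow>
        (\<exists>U V. U \<subseteq> X \<and> V \<subseteq> X \<and> asymp_nbhd X \<E> U A \<and> asymp_nbhd X \<E> V B \<and> U \<inter> V = {}))"

definition has_upper_bound :: "'a set set \<Rightarrow> 'a set set \<Rightarrow> bool" where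
  "has_upper_bound P F \<longleftrightarrow> (\<exists>U\<in>P. \<forall>S\<in>F. S \<subseteq> U)"

definition has_largest :: "'a set set \<Rightarrow> bool" where
  "has_largest P \<longleftrightarrow> (\<exists>L\<in>P. \<forall>S\<in>P. S \<subseteq> L)"

text \<open>|C| \<le> add(P), for a set C of arbitrary type, with add(P) = 1 if P has a largest
  element and otherwise the least cardinality of a subfamily of P without upper bound in P.
  Since cardinals are well ordered, |C| \<le> add(P) iff |C| \<le> |F| for every such subfamily F.\<close>
definition card_le_add :: "'b set \<Rightarrow> 'a set set \<Rightarrow> bool" where
  "card_le_add C P \<longleftrightarrow>
     (if has_largest P then (card_of C, card_of {()}) \<in> ordLeq
      else (\<forall>F. F \<subseteq> P \<longrightarrow> \<not> has_upper_bound P F \<longrightarrow> (card_of C, card_of F) \<in> ordLeq))"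

text \<open>C \<subseteq> \<E> witnesses cof_*(\<E>[A]): for every E there is C' \<in> C with E[A] \ C'[A] bounded.\<close>
definition cof_star_witness :: "'a set \<Rightarrow> ('a \<times> 'a) set set \<Rightarrow> 'a set \<Rightarrow> ('a \<times> 'a) set set \<Rightarrow> bool" where
  "cof_star_witness X \<E> A \<C> \<longleftrightarrow>
     \<C> \<subseteq> \<E> \<and> (\<forall>E\<in>\<E>. \<exists>C\<in>\<C>. bounded_set X \<E> (E `` A - C `` A))"

text \<open>cof_\<star>(\<E>_X) \<le> add(\<B>_X): for every A \<subseteq> X, cof_*(\<E>[A]) \<le> add(\<B>_X), i.e. (cof_* being a
  minimum cardinality) some witness family has cardinality \<le> add(\<B>_X).\<close>
definition cof_star_le_add :: "'a set \<Rightarrow> ('a \<times> 'a) set set \<Rightarrow> bool" where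
  "cof_star_le_add X \<E> \<longleftrightarrow>
     (\<forall>A. A \<subseteq> X \<longrightarrow> (\<exists>\<C>. cof_star_witness X \<E> A \<C> \<and> card_le_add \<C> (bornology X \<E>)))"

end

theory Submission imports Defs begin

lemma ball_parts:
  assumes "ballean X \<E>"
  shows "\<forall>E\<in>\<E>. E \<subseteq> X \<times> X \<and> Id_on X \<subseteq> E" "\<forall>E\<in>\<E>. \<forall>F\<in>\<E>. \<exists>D\<in>\<E>. E O F\<inverse> \<subseteq> D"
    "\<Union>\<E> = X \<times> X"
  using assms unfolding ballean_def by simp_all

lemma ball_sub: "ballean X \<E> \<Longrightarrow> E \<in> \<E> \<Longrightarrow> E \<subseteq> X \<times> X"
  by (rule conjunct1[OF bspec[OF ball_parts(1)]])
lemma ball_id: "ballean X \<E> \<Longrightarrow> E \<in> \<E> \<Longrightarrow> x \<in> X \<Longrightarrow> (x,x) \<in> E"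
proof -
  assume a: "ballean X \<E>" "E \<in> \<E>" "x \<in> X"
  have "Id_on X \<subseteq> E" by (rule conjunct2[OF bspec[OF ball_parts(1)[OF a(1)] a(2)]])
  then show ?thesis using a(3) by (auto simp: Id_on_def)
qed
lemma ball_comp: "ballean X \<E> \<Longrightarrow> E \<in> \<E> \<Longrightarrow> F \<in> \<E> \<Longrightarrow> \<exists>D\<in>\<E>. E O F\<inverse> \<subseteq> D"
  by (rule bspec[OF bspec[OF ball_parts(2)]])
lemma ball_cover: "ballean X \<E> \<Longrightarrow> x \<in> X \<Longrightarrow> y \<in> X \<Longrightarrow> \<exists>G\<in>\<E>. (x,y) \<in> G"
proof -
  assume a: "ballean X \<E>" "x \<in> X" "y \<in> X"
  then have "(x,y) \<in> \<Union>\<E>" using ball_parts(3)[OF a(1)] by simp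
  then show ?thesis by (elim UnionE) (rule bexI)
qed

lemma inv_dom:
  assumes b: "ballean X \<E>" and F: "F \<in> \<E>" shows "\<exists>H\<in>\<E>. F\<inverse> \<subseteq> H"
proof -
  obtain H where H: "H \<in> \<E>" "F O F\<inverse> \<subseteq> H" using ball_comp[OF b F F] by (elim bexE)
  have "F\<inverse> \<subseteq> F O F\<inverse>"
  proof
    fix p assume "p \<in> F\<inverse>"
    then obtain a c where p: "p = (a,c)" "(c,a) \<in> F" by (cases p) auto
    then have "a \<in> X" using ball_sub[OF b F] by blast
    then have "(a,a) \<in> F" by (rule ball_id[OF b F])
    then show "p \<in> F O F\<inverse>" using p by blast
  qed
  then show ?thesis using H by blast
qed

lemma comp_dom:
  assumes b: "ballean X \<E>" and E: "E \<in> \<E>" and F: "F \<in> \<E>" shows "\<exists>D\<in>\<E>. E O F \<subseteq> D"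
proof -
  obtain H where H: "H \<in> \<E>" "F\<inverse> \<subseteq> H" using inv_dom[OF b F] by (elim bexE)
  obtain D where D: "D \<in> \<E>" "E O H\<inverse> \<subseteq> D" using ball_comp[OF b E H(1)] by (elim bexE)
  have "F \<subseteq> H\<inverse>" using H(2) by auto
  then have "E O F \<subseteq> E O H\<inverse>" by auto
  then show ?thesis using D by blast
qed

lemma un_dom:
  assumes b: "ballean X \<E>" and E: "E \<in> \<E>" and F: "F \<in> \<E>" shows "\<exists>D\<in>\<E>. E \<union> F \<subseteq> D"
proof -
  obtain D where D: "D \<in> \<E>" "E O F \<subseteq> D" using comp_dom[OF b E F] by (elim bexE)
  have "E \<subseteq> E O F"
  proof
    fix p assume "p \<in> E"
    then obtain a c where p: "p = (a,c)" "(a,c) \<in> E" by (cases p) auto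
    then have "c \<in> X" using ball_sub[OF b E] by blast
    then have "(c,c) \<in> F" by (rule ball_id[OF b F])
    then show "p \<in> E O F" using p by blast
  qed
  moreover have "F \<subseteq> E O F"
  proof
    fix p assume "p \<in> F"
    then obtain a c where p: "p = (a,c)" "(a,c) \<in> F" by (cases p) auto
    then have "a \<in> X" using ball_sub[OF b F] by blast
    then have "(a,a) \<in> E" by (rule ball_id[OF b E])
    then show "p \<in> E O F" using p by blast
  qed
  ultimately have "E \<union> F \<subseteq> E O F" by (rule Un_least)
  then have "E \<union> F \<subseteq> D" using D(2) by (rule order_trans)
  then show ?thesis using D(1) by (rule bexI)
qed

lemma bounded_mono: "bounded_set X \<E> B \<Longrightarrow> B' \<subseteq> B \<Longrightarrow> bounded_set X \<E> B'"
  unfolding bounded_set_def by (meson order_trans)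

lemma bounded_Un:
  assumes b: "ballean X \<E>" and b1: "bounded_set X \<E> B1" and b2: "bounded_set X \<E> B2"
  shows "bounded_set X \<E> (B1 \<union> B2)"
proof -
  obtain E x where E: "E \<in> \<E>" "x \<in> X" "B1 \<subseteq> E `` {x}" using b1 unfolding bounded_set_def by blast
  obtain F y where F: "F \<in> \<E>" "y \<in> X" "B2 \<subseteq> F `` {y}" using b2 unfolding bounded_set_def by blast
  obtain G where G: "G \<in> \<E>" "(x,y) \<in> G" using ball_cover[OF b E(2) F(2)] by (elim bexE)
  obtain K where K: "K \<in> \<E>" "G O F \<subseteq> K" using comp_dom[OF b G(1) F(1)] by (elim bexE)
  obtain D where D: "D \<in> \<E>" "E \<union> K \<subseteq> D" using un_dom[OF b E(1) K(1)] by (elim bexE)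
  have "B1 \<subseteq> D `` {x}" using E(3) D(2) by blast
  moreover have "B2 \<subseteq> D `` {x}"
  proof
    fix z assume "z \<in> B2"
    then have "(y,z) \<in> F" using F(3) by blast
    then have "(x,z) \<in> G O F" using G(2) by blast
    then show "z \<in> D `` {x}" using K(2) D(2) by blast
  qed
  ultimately have "B1 \<union> B2 \<subseteq> D `` {x}" by (rule Un_least)
  then show ?thesis unfolding bounded_set_def using D(1) E(2) by blast
qed

lemma key:
  assumes "card_le_add C P" "\<not> has_largest P" "G \<subseteq> P" "(card_of G, card_of C) \<in> ordLess"
  shows "has_upper_bound P G"
proof (rule ccontr)
  assume "\<not> has_upper_bound P G"
  then have "(card_of C, card_of G) \<in> ordLeq" using assms(1,2,3) unfolding card_le_add_def by simp
  then have "(card_of C, card_of C) \<in> ordLess" using assms(4) by (rule ordLeq_ordLess_trans)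
  then show False by (rule notE[OF ordLess_irreflexive])
qed


theorem theorem1p2:
  fixes X :: "'a set" and \<E> :: "('a \<times> 'a) set set"
  assumes "ballean X \<E>"
    and "cof_star_le_add X \<E>"
  shows "normal_ballean X \<E>"
  unfolding normal_ballean_def
proof (intro allI impI)
  fix A B assume AX: "A \<subseteq> X" and BX: "B \<subseteq> X" and ad: "asymp_disjoint X \<E> A B"
  note b = assms(1)
  have EX: "\<And>E. E \<in> \<E> \<Longrightarrow> E `` Y \<subseteq> X" for Y using ball_sub[OF b] by blast
  show "\<exists>U V. U \<subseteq> X \<and> V \<subseteq> X \<and> asymp_nbhd X \<E> U A \<and> asymp_nbhd X \<E> V B \<and> U \<inter> V = {}"
  proof (cases "has_largest (bornology X \<E>)")
    case True
    then obtain L where L: "bounded_set X \<E> L" "\<And>S. bounded_set X \<E> S \<Longrightarrow> S \<subseteq> L"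
      unfolding has_largest_def bornology_def by auto
    have "X \<subseteq> L"
    proof
      fix x assume x: "x \<in> X"
      obtain E where E: "E \<in> \<E>" "(x,x) \<in> E" using ball_cover[OF b x x] by (elim bexE)
      have "{x} \<subseteq> E `` {x}" using E(2) by blast
      then have "bounded_set X \<E> {x}" using E(1) x unfolding bounded_set_def by blast
      then show "x \<in> L" using L(2) by blast
    qed
    then have XB: "bounded_set X \<E> X" using L(1) bounded_mono by blast
    have "asymp_nbhd X \<E> X A" unfolding asymp_nbhd_def
    proof
      fix E assume "E \<in> \<E>"
      then have "E `` A - X \<subseteq> X" using EX by blast
      then show "bounded_set X \<E> (E `` A - X)" by (rule bounded_mono[OF XB])
    qed
    moreover have "asymp_nbhd X \<E> {} B" unfolding asymp_nbhd_def
    proof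
      fix E assume "E \<in> \<E>"
      then have "E `` B - {} \<subseteq> X" using EX by blast
      then show "bounded_set X \<E> (E `` B - {})" by (rule bounded_mono[OF XB])
    qed
    moreover have "X \<subseteq> X" "{} \<subseteq> X" "X \<inter> {} = {}" by auto
    ultimately show ?thesis by blast
  next
    case nl: False
    show ?thesis
    proof (cases "\<E> = {}")
      case True
      then have "asymp_nbhd X \<E> {} A" "asymp_nbhd X \<E> {} B" unfolding asymp_nbhd_def by simp_all
      then show ?thesis by blast
    next
      case Ene: False
      obtain CA where CA: "cof_star_witness X \<E> A CA" "card_le_add CA (bornology X \<E>)"
        using assms(2) AX unfolding cof_star_le_add_def by blast
      obtain CB where CB: "cof_star_witness X \<E> B CB" "card_le_add CB (bornology X \<E>)"
        using assms(2) BX unfolding cof_star_le_add_def by blast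
      have CAE: "CA \<subseteq> \<E>" and CAw: "\<forall>E\<in>\<E>. \<exists>C\<in>CA. bounded_set X \<E> (E `` A - C `` A)"
        using CA(1) unfolding cof_star_witness_def by simp_all
      have CBE: "CB \<subseteq> \<E>" and CBw: "\<forall>E\<in>\<E>. \<exists>C\<in>CB. bounded_set X \<E> (E `` B - C `` B)"
        using CB(1) unfolding cof_star_witness_def by simp_all
      obtain E0 where E0: "E0 \<in> \<E>" using Ene by blast
      have CAn: "CA \<noteq> {}"
      proof -
        obtain C where "C \<in> CA" using bspec[OF CAw E0] by (elim bexE)
        then show ?thesis by auto
      qed
      have CBn: "CB \<noteq> {}"
      proof -
        obtain C where "C \<in> CB" using bspec[OF CBw E0] by (elim bexE)
        then show ?thesis by auto
      qed
      obtain J :: "('a \<times> 'a) set set" and f g where J: "card_le_add J (bornology X \<E>)" "f ` J = CA" "g ` J = CB"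
      proof (cases "(card_of CB, card_of CA) \<in> ordLeq")
        case True
        have "\<exists>g. g ` CA = CB" using card_of_ordLeq2[OF CBn, of CA] True by (rule iffD2)
        then obtain g where g: "g ` CA = CB" by (elim exE)
        have "id ` CA = CA" by simp
        show ?thesis by (rule that[of CA id g, OF CA(2) \<open>id ` CA = CA\<close> g])
      next
        case False
        have "(card_of CA, card_of CB) \<in> ordLeq"
          using ordLeq_total[OF card_of_Well_order card_of_Well_order, of CA CB] False by blast
        then have "\<exists>f. f ` CB = CA" using card_of_ordLeq2[OF CAn, of CB] by (rule iffD2[rotated])
        then obtain f where f: "f ` CB = CA" by (elim exE)
        have "id ` CB = CB" by simp
        show ?thesis by (rule that[of CB f id, OF CB(2) f \<open>id ` CB = CB\<close>])
      qed
      define r where "r = card_of J"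
      have Fr: "Field r = J" unfolding r_def by (rule Field_card_of)
      have "Well_order r" unfolding r_def by (rule card_of_Well_order)
      then have "total_on (Field r) r" unfolding well_order_on_def linear_order_on_def by (elim conjE)
      then have tot: "total_on J r" unfolding Fr .
      define S :: "('a \<times> 'a) set \<Rightarrow> ('a \<times> 'a) set \<Rightarrow> 'a set" where "S = (\<lambda>C D. C `` A \<inter> D `` B)"
      have Sb: "bounded_set X \<E> (S C D)" if CD: "C \<in> \<E>" "D \<in> \<E>" for C D
      proof -
        obtain M where M: "M \<in> \<E>" "C \<union> D \<subseteq> M" using un_dom[OF b CD] by (elim bexE)
        have "bounded_set X \<E> (M `` A \<inter> M `` B)" using ad M(1) unfolding asymp_disjoint_def by blast
        moreover have "S C D \<subseteq> M `` A \<inter> M `` B" using M(2) unfolding S_def by blast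
        ultimately show ?thesis by (rule bounded_mono)
      qed
      have fE: "f j \<in> \<E>" if jJ: "j \<in> J" for j using J(2) CAE jJ by blast
      have gE: "g j \<in> \<E>" if jJ: "j \<in> J" for j using J(3) CBE jJ by blast
      have small: "has_upper_bound (bornology X \<E>) (h ` underS r j)"
        if jh: "j \<in> J" "h ` underS r j \<subseteq> bornology X \<E>" for j and h :: "('a \<times> 'a) set \<Rightarrow> 'a set"
      proof (rule key[OF J(1) nl jh(2)])
        have jF: "j \<in> Field r" using jh(1) Fr by simp
        have "(card_of (underS r j), r) \<in> ordLess"
          unfolding r_def by (rule card_of_underS[OF card_of_Card_order jF[unfolded r_def]])
        then show "(card_of (h ` underS r j), card_of J) \<in> ordLess"
          unfolding r_def by (rule ordLeq_ordLess_trans[OF card_of_image])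
      qed
      have uS: "underS r j \<subseteq> J" for j unfolding underS_def Fr[symmetric] Field_def by blast
      have "\<exists>Bj. bounded_set X \<E> Bj \<and> (\<forall>l\<in>underS r j. S (f j) (g l) \<subseteq> Bj)
               \<and> (\<forall>k\<in>underS r j. S (f k) (g j) \<subseteq> Bj) \<and> S (f j) (g j) \<subseteq> Bj" if j: "j \<in> J" for j
      proof -
        have lJ: "l \<in> J" if "l \<in> underS r j" for l using uS that by blast
        have "(\<lambda>l. S (f j) (g l)) ` underS r j \<subseteq> bornology X \<E>"
        proof (rule image_subsetI)
          fix l assume "l \<in> underS r j"
          then show "S (f j) (g l) \<in> bornology X \<E>" unfolding bornology_def
            using Sb[OF fE[OF j] gE[OF lJ]] by simp
        qed
        from small[OF j this] obtain U1 where U1': "U1 \<in> bornology X \<E>"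
            "\<forall>T\<in>(\<lambda>l. S (f j) (g l)) ` underS r j. T \<subseteq> U1"
          unfolding has_upper_bound_def by (elim bexE) simp
        have U1: "bounded_set X \<E> U1" "\<forall>l\<in>underS r j. S (f j) (g l) \<subseteq> U1"
          using U1' unfolding bornology_def by auto
        have "(\<lambda>k. S (f k) (g j)) ` underS r j \<subseteq> bornology X \<E>"
        proof (rule image_subsetI)
          fix l assume "l \<in> underS r j"
          then show "S (f l) (g j) \<in> bornology X \<E>" unfolding bornology_def
            using Sb[OF fE[OF lJ] gE[OF j]] by simp
        qed
        from small[OF j this] obtain U2 where U2': "U2 \<in> bornology X \<E>"
            "\<forall>T\<in>(\<lambda>k. S (f k) (g j)) ` underS r j. T \<subseteq> U2"
          unfolding has_upper_bound_def by (elim bexE) simp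
        have U2: "bounded_set X \<E> U2" "\<forall>k\<in>underS r j. S (f k) (g j) \<subseteq> U2"
          using U2' unfolding bornology_def by auto
        have "bounded_set X \<E> (U1 \<union> U2 \<union> S (f j) (g j))"
          by (rule bounded_Un[OF b bounded_Un[OF b U1(1) U2(1)] Sb[OF fE[OF j] gE[OF j]]])
        moreover have "\<forall>l\<in>underS r j. S (f j) (g l) \<subseteq> U1 \<union> U2 \<union> S (f j) (g j)" using U1(2) by blast
        moreover have "\<forall>k\<in>underS r j. S (f k) (g j) \<subseteq> U1 \<union> U2 \<union> S (f j) (g j)" using U2(2) by blast
        moreover have "S (f j) (g j) \<subseteq> U1 \<union> U2 \<union> S (f j) (g j)" by blast
        ultimately show ?thesis by blast
      qed
      then have "\<forall>j\<in>J. \<exists>Bj. bounded_set X \<E> Bj \<and> (\<forall>l\<in>underS r j. S (f j) (g l) \<subseteq> Bj)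
               \<and> (\<forall>k\<in>underS r j. S (f k) (g j) \<subseteq> Bj) \<and> S (f j) (g j) \<subseteq> Bj" by (rule ballI)
      from bchoice[OF this] obtain Bf where Bf: "\<forall>j\<in>J. bounded_set X \<E> (Bf j) \<and> (\<forall>l\<in>underS r j. S (f j) (g l) \<subseteq> Bf j)
               \<and> (\<forall>k\<in>underS r j. S (f k) (g j) \<subseteq> Bf j) \<and> S (f j) (g j) \<subseteq> Bf j"
        by (elim exE)
      have Bfb: "bounded_set X \<E> (Bf j)" if "j \<in> J" for j using Bf that by blast
      have Bf1: "S (f j) (g l) \<subseteq> Bf j" if "j \<in> J" "l \<in> underS r j" for j l using Bf that by blast
      have Bf2: "S (f k) (g j) \<subseteq> Bf j" if "j \<in> J" "k \<in> underS r j" for j k using Bf that by blast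
      have Bf3: "S (f j) (g j) \<subseteq> Bf j" if "j \<in> J" for j using Bf that by blast
      define U where "U = (\<Union>j\<in>J. f j `` A - Bf j)"
      define V where "V = (\<Union>j\<in>J. g j `` B - Bf j)"
      have UX: "U \<subseteq> X" unfolding U_def using fE EX by blast
      have VX: "V \<subseteq> X" unfolding V_def using gE EX by blast
      have nU: "asymp_nbhd X \<E> U A" unfolding asymp_nbhd_def
      proof
        fix E assume E: "E \<in> \<E>"
        obtain C where C: "C \<in> CA" "bounded_set X \<E> (E `` A - C `` A)"
          using bspec[OF CAw E] by (elim bexE)
        obtain j where j: "j \<in> J" "C = f j" using C(1) J(2) by blast
        have "E `` A - U \<subseteq> (E `` A - C `` A) \<union> Bf j" unfolding U_def using j by blast
        then show "bounded_set X \<E> (E `` A - U)"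
          by (rule bounded_mono[OF bounded_Un[OF b C(2) Bfb[OF j(1)]]])
      qed
      have nV: "asymp_nbhd X \<E> V B" unfolding asymp_nbhd_def
      proof
        fix E assume E: "E \<in> \<E>"
        obtain C where C: "C \<in> CB" "bounded_set X \<E> (E `` B - C `` B)"
          using bspec[OF CBw E] by (elim bexE)
        obtain j where j: "j \<in> J" "C = g j" using C(1) J(3) by blast
        have "E `` B - V \<subseteq> (E `` B - C `` B) \<union> Bf j" unfolding V_def using j by blast
        then show "bounded_set X \<E> (E `` B - V)"
          by (rule bounded_mono[OF bounded_Un[OF b C(2) Bfb[OF j(1)]]])
      qed
      have UV: "U \<inter> V = {}"
      proof (rule ccontr)
        assume "U \<inter> V \<noteq> {}"
        then obtain x j l where x: "j \<in> J" "l \<in> J" "x \<in> f j `` A" "x \<notin> Bf j" "x \<in> g l `` B" "x \<notin> Bf l"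
          unfolding U_def V_def by blast
        have xS: "x \<in> S (f j) (g l)" using x(3,5) unfolding S_def by blast
        have "j = l \<or> (l,j) \<in> r \<or> (j,l) \<in> r"
          using tot x(1,2) unfolding total_on_def by blast
        then show False
        proof (elim disjE)
          assume "j = l" then show ?thesis using Bf3[OF x(1)] xS x(4) by blast
        next
          assume "(l,j) \<in> r"
          show ?thesis
          proof (cases "l = j")
            case True then show ?thesis using Bf3[OF x(1)] xS x(4) by blast
          next
            case False
            then have "l \<in> underS r j" using \<open>(l,j) \<in> r\<close> unfolding underS_def by blast
            then show ?thesis using Bf1[OF x(1)] xS x(4) by blast
          qed
        next
          assume "(j,l) \<in> r"
          show ?thesis
          proof (cases "l = j")
            case True then show ?thesis using Bf3[OF x(1)] xS x(4) by blast
          next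
            case False
            then have "j \<in> underS r l" using \<open>(j,l) \<in> r\<close> unfolding underS_def by blast
            then show ?thesis using Bf2[OF x(2)] xS x(6) by blast
          qed
        qed
      qed
      show ?thesis using UX VX nU nV UV by blast
    qed
  qed
qed

end
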